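(* Fix an integer $q\ge 2$ and $c\in\mathbb{R}$. Then $\gamma(c)=\beta(c)/\log q$, where $\gamma(c)$ is the infimum of all real $\gamma$ such that $\sup_{x\in\mathbb{R}}\left|\sum_{n=0}^{N-1}e^{2\pi i cS_q(n)}e^{2\pi i n x}\right|=O(N^\gamma)$, and $\beta(c)=\sup_{\mu\in\mathcal{M}_T}\int_{\mathbb{T}}f_c\,d\mu$ with $f_c(x)=\log\left|\frac{\sin \pi q(x+c)}{\sin\pi(x+c)}\right|$.
   Context: $S_q(n)$ is the sum of the base-$q$ digits of $n\ge 0$. $\mathbb{T}=\mathbb{R}/\mathbb{Z}$, $T:\mathbb{T}\to\mathbb{T}$ is $Tx=qx\bmod 1$, and $\mathcal{M}_T$ is the set of $T$-invariant Borel probability measures on $\mathbb{T}$. *)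

theory Defs
  imports "HOL-Probability.Probability" "HOL-Library.Landau_Symbols"
begin

function digit_sum :: "nat \<Rightarrow> nat \<Rightarrow> nat" where
  "digit_sum q n = (if q < 2 \<or> n = 0 then 0 else n mod q + digit_sum q (n div q))"
  by auto
termination by (relation "Wellfounded.measure snd") auto

declare digit_sum.simps[simp del]

text \<open>The circle T = R/Z is represented by the fundamental domain [0,1) with its Borel sets;
  the map T x = q x mod 1.\<close>
definition times_q_map :: "nat \<Rightarrow> real \<Rightarrow> real" where
  "times_q_map q x = frac (real q * x)"

definition circle_borel :: "real measure" where
  "circle_borel = restrict_space borel {0..<1}"

definition invariant_measures :: "nat \<Rightarrow> real measure set" where
  "invariant_measures q = {M. sets M = sets circle_borel \<and> prob_space M \<and>
      times_q_map q \<in> measurable M M \<and> distr M M (times_q_map q) = M}"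

text \<open>f_c(x) = log |sin(pi q (x+c)) / sin(pi (x+c))|, with value -\<infinity> at zeros of the
  numerator and its continuous extension (log q) at the removable singularities x+c \<in> Z.\<close>
definition f_c :: "nat \<Rightarrow> real \<Rightarrow> real \<Rightarrow> ereal" where
  "f_c q c x = (let y = x + c in
     if y \<in> \<int> then ereal (ln (real q))
     else if sin (pi * real q * y) = 0 then -\<infinity>
     else ereal (ln \<bar>sin (pi * real q * y) / sin (pi * y)\<bar>))"

text \<open>Integral of an extended-real function bounded above by a real constant b:
  b - \<integral>(b - f) d\<mu> (the latter a nonnegative integral, possibly \<infinity>).\<close>
definition upper_bdd_integral :: "real measure \<Rightarrow> real \<Rightarrow> (real \<Rightarrow> ereal) \<Rightarrow> ereal" where
  "upper_bdd_integral M b f =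
     ereal b - enn2ereal (\<integral>\<^sup>+ x. e2ennreal (ereal b - f x) \<partial>M)"

definition beta_c :: "nat \<Rightarrow> real \<Rightarrow> ereal" where
  "beta_c q c = (SUP M \<in> invariant_measures q. upper_bdd_integral M (ln (real q)) (f_c q c))"

definition gamma_c :: "nat \<Rightarrow> real \<Rightarrow> real" where
  "gamma_c q c = Inf {g :: real.
     (\<lambda>N::nat. SUP x :: real. cmod (\<Sum>n<N. exp (2 * pi * \<i> * complex_of_real (c * real (digit_sum q n)))
                                       * exp (2 * pi * \<i> * complex_of_real (real n * x))))
       \<in> O(\<lambda>N. real N powr g)}"

end

theory Submission
  imports Defs
begin

definition ee :: "real \<Rightarrow> complex" where
  "ee t = exp (2 * pi * \<i> * complex_of_real t)"

lemma ee_add: "ee (a + b) = ee a * ee b"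
  unfolding ee_def by (simp add: distrib_left exp_add[symmetric])

lemma norm_ee [simp]: "norm (ee t) = 1"
  unfolding ee_def by (simp add: norm_exp_i_times[of "2*pi*t", simplified mult.assoc]  mult.commute mult.left_commute)

lemma ee_0 [simp]: "ee 0 = 1" by (simp add: ee_def)

lemma ee_int: "x \<in> \<int> \<Longrightarrow> ee x = 1"
  unfolding ee_def by (auto elim!: Ints_cases simp: exp_integer_2pi mult.commute mult.left_commute)

lemma ee_nat [simp]: "ee (real n) = 1"
  by (rule ee_int) auto

lemma ee_of_int [simp]: "ee (real_of_int n) = 1"
  by (rule ee_int) auto

lemma ee_periodic: "x - y \<in> \<int> \<Longrightarrow> ee x = ee y"
proof -
  assume "x - y \<in> \<int>"
  then have "ee x = ee (x - y) * ee y" using ee_add[of "x-y" y] by simp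
  thus ?thesis using ee_int[OF \<open>x - y \<in> \<int>\<close>] by simp
qed

definition Phi :: "nat \<Rightarrow> real \<Rightarrow> nat \<Rightarrow> real \<Rightarrow> complex" where
  "Phi q c N x = (\<Sum>n<N. exp (2 * pi * \<i> * complex_of_real (c * real (digit_sum q n)))
                                       * exp (2 * pi * \<i> * complex_of_real (real n * x)))"

lemma Phi_ee: "Phi q c N x = (\<Sum>n<N. ee (c * real (digit_sum q n)) * ee (real n * x))"
  unfolding Phi_def ee_def by simp

definition Gs :: "nat \<Rightarrow> real \<Rightarrow> real \<Rightarrow> complex" where
  "Gs q c x = (\<Sum>d<q. ee (real d * (x + c)))"

definition Gf :: "nat \<Rightarrow> real \<Rightarrow> real \<Rightarrow> real" where
  "Gf q c x = cmod (Gs q c x)"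

definition Pk :: "nat \<Rightarrow> real \<Rightarrow> nat \<Rightarrow> real \<Rightarrow> real" where
  "Pk q c k x = (\<Prod>j<k. Gf q c (real q ^ j * x))"

lemma digit_sum_step:
  assumes "2 \<le> q" "d < q"
  shows "digit_sum q (q * m + d) = d + digit_sum q m"
proof (cases "q * m + d = 0")
  case True
  then show ?thesis using assms by (simp add: digit_sum.simps)
next
  case False
  have "digit_sum q (q * m + d) = (q*m+d) mod q + digit_sum q ((q*m+d) div q)"
    using False assms by (subst digit_sum.simps) auto
  also have "(q*m+d) mod q = d" using assms by simp
  also have "(q*m+d) div q = m" using assms by simp
  finally show ?thesis .
qed

lemma sum_lessThan_add: "(\<Sum>n<a+(b::nat). f n) = (\<Sum>n<a. f n) + (\<Sum>n<b. f (a + n))"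
  by (induction b) (auto simp: add_ac)

lemma Phi_mult:
  assumes "2 \<le> q"
  shows "Phi q c (q * M) x = Gs q c x * Phi q c M (real q * x)"
proof (induction M)
  case 0
  then show ?case by (simp add: Phi_def)
next
  case (Suc M)
  have e: "q * Suc M = q * M + q" by simp
  have "Phi q c (q * Suc M) x = Phi q c (q * M) x +
      (\<Sum>d<q. ee (c * real (digit_sum q (q*M + d))) * ee (real (q*M + d) * x))"
    unfolding Phi_ee e sum_lessThan_add by (rule refl)
  also have "(\<Sum>d<q. ee (c * real (digit_sum q (q*M + d))) * ee (real (q*M + d) * x))
     = (\<Sum>d<q. ee (real d * (x + c)) * (ee (c * real (digit_sum q M)) * ee (real M * (real q * x))))"
  proof (rule sum.cong[OF refl])
    fix d assume "d \<in> {..<q}"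
    then have ds: "digit_sum q (q*M + d) = d + digit_sum q M" using digit_sum_step assms by auto
    have "ee (c * real (digit_sum q (q*M + d))) * ee (real (q*M + d) * x)
        = ee (c * real (digit_sum q (q*M + d)) + real (q*M + d) * x)" by (simp add: ee_add)
    also have "c * real (digit_sum q (q*M + d)) + real (q*M + d) * x
        = real d * (x + c) + (c * real (digit_sum q M) + real M * (real q * x))"
      unfolding ds by (simp add: algebra_simps)
    finally show "ee (c * real (digit_sum q (q*M + d))) * ee (real (q*M + d) * x)
     = ee (real d * (x + c)) * (ee (c * real (digit_sum q M)) * ee (real M * (real q * x)))"
      by (simp add: ee_add)
  qed
  also have "\<dots> = Gs q c x * (ee (c * real (digit_sum q M)) * ee (real M * (real q * x)))"
    unfolding Gs_def by (simp add: sum_distrib_right)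
  finally show ?case using Suc by (simp add: Phi_ee distrib_left)
qed

lemma Pk_Suc: "Pk q c (Suc k) x = Gf q c x * Pk q c k (real q * x)"
  unfolding Pk_def prod.lessThan_Suc_shift by (simp add: mult.assoc mult.left_commute)

lemma Phi_pow:
  assumes "2 \<le> q"
  shows "cmod (Phi q c (q ^ k) x) = Pk q c k x"
proof (induction k arbitrary: x)
  case 0
  then show ?case by (simp add: Phi_ee Pk_def norm_mult digit_sum.simps)
next
  case (Suc k)
  have "Phi q c (q ^ Suc k) x = Gs q c x * Phi q c (q^k) (real q * x)"
    using Phi_mult[OF assms] by simp
  then have "cmod (Phi q c (q ^ Suc k) x) = Gf q c x * Pk q c k (real q * x)"
    using Suc by (simp add: norm_mult Gf_def)
  also have "\<dots> = Pk q c (Suc k) x"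
    by (rule Pk_Suc[symmetric])
  finally show ?case .
qed

lemma Gf_nonneg: "0 \<le> Gf q c x" by (simp add: Gf_def)

lemma Gf_le: "Gf q c x \<le> real q"
proof -
  have "Gf q c x \<le> (\<Sum>d<q. norm (ee (real d * (x + c))))"
    unfolding Gf_def Gs_def by (rule norm_sum)
  thus ?thesis by simp
qed

lemma Pk_nonneg: "0 \<le> Pk q c k x" by (simp add: Pk_def prod_nonneg Gf_nonneg)


lemma Phi_bound:
  assumes "2 \<le> q" "N < q ^ K"
  shows "cmod (Phi q c N x) \<le> real (q - 1) * (\<Sum>i<K. Pk q c i x)"
  using assms(2)
proof (induction K arbitrary: N x)
  case 0
  then show ?case by (simp add: Phi_def)
next
  case (Suc K)
  define M where "M = N div q"
  define d where "d = N mod q"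
  have N: "N = q * M + d" unfolding M_def d_def by simp
  have d0: "d < q" unfolding d_def using assms by auto
  then have d: "d < q" "d \<le> q - 1" by linarith+
  have M: "M < q ^ K" using Suc.prems unfolding M_def
    by (metis assms(1) div_less_iff_less_mult mult.commute not_numeral_le_zero power_Suc zero_less_iff_neq_zero)
  have "Phi q c N x = Phi q c (q*M) x + (\<Sum>r<d. ee (c * real (digit_sum q (q*M + r))) * ee (real (q*M + r) * x))"
    unfolding N Phi_ee by (simp add: sum_lessThan_add)
  then have "cmod (Phi q c N x) \<le> cmod (Phi q c (q*M) x) + cmod (\<Sum>r<d. ee (c * real (digit_sum q (q*M + r))) * ee (real (q*M + r) * x))"
    by (simp add: norm_triangle_ineq)
  also have "cmod (\<Sum>r<d. ee (c * real (digit_sum q (q*M + r))) * ee (real (q*M + r) * x)) \<le> (\<Sum>r<d. cmod (ee (c * real (digit_sum q (q*M + r))) * ee (real (q*M + r) * x)))"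
    by (rule norm_sum)
  also have "\<dots> = real d" by (simp add: norm_mult)
  also have "cmod (Phi q c (q*M) x) = Gf q c x * cmod (Phi q c M (real q * x))"
    using Phi_mult[OF assms(1)] by (simp add: norm_mult Gf_def)
  also have "\<dots> \<le> Gf q c x * (real (q - 1) * (\<Sum>i<K. Pk q c i (real q * x)))"
    by (rule mult_left_mono[OF Suc.IH[OF M] Gf_nonneg])
  finally have "cmod (Phi q c N x) \<le> real (q - 1) * (\<Sum>i<K. Gf q c x * Pk q c i (real q * x)) + real (q - 1)"
    using d by (simp add: sum_distrib_left algebra_simps)
  also have "\<dots> = real (q - 1) * (\<Sum>i<Suc K. Pk q c i x)"
    by (simp only: sum.lessThan_Suc_shift Pk_Suc) (simp add: Pk_def algebra_simps)
  finally show ?case .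
qed

lemma ee_cis: "ee t = cis (2 * pi * t)"
  unfolding ee_def by (simp add: cis_conv_exp mult.commute mult.left_commute)

lemma norm_ee_minus_1: "cmod (ee t - 1) = 2 * \<bar>sin (pi * t)\<bar>"
proof -
  define s where "s = sin (pi * t)"
  define co where "co = cos (pi * t)"
  have c: "cos (2*pi*t) = 1 - 2 * s^2" unfolding s_def using cos_double_sin[of "pi*t"] by (simp add: mult.assoc)
  have si: "sin (2*pi*t) = 2 * s * co" unfolding s_def co_def using sin_double[of "pi*t"] by (simp add: mult.assoc)
  have one: "s^2 + co^2 = 1" unfolding s_def co_def by simp
  have "(cmod (ee t - 1))^2 = (cos (2*pi*t) - 1)^2 + (sin (2*pi*t))^2"
    by (simp add: cmod_power2 ee_cis)
  also have "\<dots> = 4 * s^2 * (s^2 + co^2)" unfolding c si by (simp add: power2_eq_square algebra_simps)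
  also have "\<dots> = (2 * \<bar>s\<bar>)^2" unfolding one by (simp add: power2_eq_square)
  finally have h: "(cmod (ee t - 1))^2 = (2 * \<bar>s\<bar>)^2" .
  have "cmod (ee t - 1) = 2 * \<bar>s\<bar>"
    using h by (subst (asm) power2_eq_iff_nonneg) auto
  thus ?thesis unfolding s_def .
qed

lemma sin_pi_eq_0_iff: "sin (pi * y) = 0 \<longleftrightarrow> y \<in> \<int>"
proof
  assume "sin (pi * y) = 0"
  then obtain i :: int where "pi * y = of_int i * pi" using sin_zero_iff_int2 by blast
  then have "y = of_int i" by simp
  thus "y \<in> \<int>" by simp
next
  assume "y \<in> \<int>"
  then obtain i where "y = of_int i" by (auto elim: Ints_cases)
  thus "sin (pi * y) = 0" using sin_zero_iff_int2 by (auto simp: mult.commute)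
qed

lemma ee_eq_1_iff: "ee y = 1 \<longleftrightarrow> y \<in> \<int>"
  using norm_ee_minus_1[of y] sin_pi_eq_0_iff[of y] by auto

lemma ee_nat_mult: "ee (real n * t) = ee t ^ n"
  unfolding ee_def by (simp add: exp_of_nat_mult[symmetric] mult.commute mult.left_commute)

lemma Gf_int:
  assumes "x + c \<in> \<int>"
  shows "Gf q c x = real q"
proof -
  have "\<And>d. ee (real d * (x + c)) = 1"
    using assms by (intro ee_int) (auto simp: Ints_mult)
  thus ?thesis by (simp add: Gf_def Gs_def)
qed

lemma Gf_nonint:
  assumes "x + c \<notin> \<int>"
  shows "Gf q c x = \<bar>sin (pi * real q * (x + c)) / sin (pi * (x + c))\<bar>"
proof -
  define w where "w = ee (x + c)"
  have w1: "w \<noteq> 1" using assms ee_eq_1_iff unfolding w_def by auto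
  have "Gs q c x = (\<Sum>d<q. w ^ d)" unfolding Gs_def w_def by (simp add: ee_nat_mult)
  also have "\<dots> = (w ^ q - 1) / (w - 1)" using w1 by (rule geometric_sum)
  finally have "Gf q c x = cmod (w^q - 1) / cmod (w - 1)" by (simp add: Gf_def norm_divide)
  also have "w ^ q = ee (real q * (x + c))" unfolding w_def by (simp add: ee_nat_mult)
  finally show ?thesis unfolding w_def norm_ee_minus_1 by (simp add: abs_divide mult.assoc)
qed

lemma f_c_Gf:
  assumes "2 \<le> q"
  shows "f_c q c x = (if Gf q c x = 0 then -\<infinity> else ereal (ln (Gf q c x)))"
proof (cases "x + c \<in> \<int>")
  case True
  then show ?thesis using assms by (simp add: f_c_def Gf_int Let_def)
next
  case False
  have s: "sin (pi * (x + c)) \<noteq> 0" using False sin_pi_eq_0_iff by blast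
  show ?thesis using False s by (simp add: f_c_def Gf_nonint Let_def)
qed

lemma Gf_periodic: "y \<in> \<int> \<Longrightarrow> Gf q c (x + y) = Gf q c x"
proof -
  assume y: "y \<in> \<int>"
  have "\<And>d. ee (real d * (x + y + c)) = ee (real d * (x + c))"
    by (rule ee_periodic) (use y in \<open>auto simp: algebra_simps Ints_mult\<close>)
  thus ?thesis by (simp add: Gf_def Gs_def)
qed

lemma Gf_frac: "Gf q c (frac z) = Gf q c z"
proof -
  have "Gf q c (frac z + of_int \<lfloor>z\<rfloor>) = Gf q c (frac z)" by (rule Gf_periodic) auto
  thus ?thesis by (simp add: frac_def)
qed

lemma Gf_cont: "continuous_on A (Gf q c)"
  unfolding Gf_def Gs_def ee_def by (intro continuous_intros)

lemma times_q_iter: "(times_q_map q ^^ j) y = (if j = 0 then y else frac (real q ^ j * y))"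
proof (induction j)
  case 0 then show ?case by simp
next
  case (Suc j)
  show ?case
  proof (cases "j = 0")
    case True then show ?thesis by (simp add: times_q_map_def)
  next
    case False
    have "frac (real q * frac (real q ^ j * y)) = frac (real q * (real q ^ j * y) - of_int (int q * \<lfloor>real q ^ j * y\<rfloor>))"
      by (simp add: frac_def algebra_simps)
    also have "\<dots> = frac (real q ^ Suc j * y)"
      by (metis diff_conv_add_uminus frac_add_of_int_right of_int_minus mult.assoc power_Suc)
    finally show ?thesis using Suc False by (simp add: times_q_map_def)
  qed
qed

lemma times_q_iter_frac: "y \<in> {0..<1} \<Longrightarrow> (times_q_map q ^^ j) y = frac (real q ^ j * y)"
  by (simp add: times_q_iter)

lemma Gf_iter: "y \<in> {0..<1} \<Longrightarrow> Gf q c ((times_q_map q ^^ j) y) = Gf q c (real q ^ j * y)"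
  by (simp add: times_q_iter_frac Gf_frac)

lemma times_q_in: "times_q_map q x \<in> {0..<1}"
  by (simp add: times_q_map_def frac_lt_1)

lemma times_q_iter_in: "y \<in> {0..<1} \<Longrightarrow> (times_q_map q ^^ j) y \<in> {0..<1}"
  by (cases j) (auto simp: times_q_map_def frac_lt_1)

lemma space_circle: "space circle_borel = {0..<1}"
  by (simp add: circle_borel_def space_restrict_space)

lemma times_q_meas: "times_q_map q \<in> circle_borel \<rightarrow>\<^sub>M circle_borel"
  unfolding circle_borel_def
proof (rule measurable_restrict_space3)
  show "times_q_map q \<in> borel \<rightarrow>\<^sub>M borel"
    unfolding times_q_map_def frac_def by measurable
  show "times_q_map q \<in> {0..<1} \<rightarrow> {0..<1}" using times_q_in by auto
qed

lemma f_c_meas: "2 \<le> q \<Longrightarrow> f_c q c \<in> borel_measurable borel"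
proof -
  assume q: "2 \<le> q"
  have [measurable]: "Gf q c \<in> borel_measurable borel"
    using Gf_cont by (rule borel_measurable_continuous_onI)
  have "(\<lambda>x. if Gf q c x = 0 then -\<infinity> else ereal (ln (Gf q c x))) \<in> borel_measurable borel"
    by measurable
  moreover have "f_c q c = (\<lambda>x. if Gf q c x = 0 then -\<infinity> else ereal (ln (Gf q c x)))"
    by (rule ext) (rule f_c_Gf[OF q])
  ultimately show ?thesis by simp
qed

definition Dk :: "nat \<Rightarrow> real \<Rightarrow> complex" where
  "Dk M u = (\<Sum>n<M. ee (real n * u))"

lemma Dk_bound: "cmod (Dk M u) \<le> real M"
proof -
  have "cmod (Dk M u) \<le> (\<Sum>n<M. cmod (ee (real n * u)))" unfolding Dk_def by (rule norm_sum)
  thus ?thesis by simp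
qed

lemma Dk_bound2:
  assumes "sin (pi * u) \<noteq> 0"
  shows "cmod (Dk M u) \<le> 1 / \<bar>sin (pi * u)\<bar>"
proof -
  define w where "w = ee u"
  have "u \<notin> \<int>" using assms sin_pi_eq_0_iff by blast
  then have w1: "w \<noteq> 1" unfolding w_def using ee_eq_1_iff by blast
  have "Dk M u = (\<Sum>n<M. w ^ n)" unfolding Dk_def w_def by (simp add: ee_nat_mult)
  also have "\<dots> = (w ^ M - 1) / (w - 1)" using w1 by (rule geometric_sum)
  finally have "cmod (Dk M u) = cmod (w ^ M - 1) / cmod (w - 1)" by (simp add: norm_divide)
  also have "cmod (w - 1) = 2 * \<bar>sin (pi * u)\<bar>" unfolding w_def by (rule norm_ee_minus_1)
  also have "cmod (w ^ M - 1) \<le> 2"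
  proof -
    have "cmod (w ^ M - 1) \<le> cmod (w ^ M) + cmod (1::complex)" by (rule norm_triangle_ineq4)
    thus ?thesis unfolding w_def by (simp add: norm_power)
  qed
  then have "cmod (w ^ M - 1) / (2 * \<bar>sin (pi * u)\<bar>) \<le> 2 / (2 * \<bar>sin (pi * u)\<bar>)"
    using assms by (intro divide_right_mono) auto
  finally show ?thesis by simp
qed

lemma Dk_periodic: "u - u' \<in> \<int> \<Longrightarrow> Dk M u = Dk M u'"
  unfolding Dk_def
  by (intro sum.cong refl ee_periodic) (auto simp: right_diff_distrib[symmetric] Ints_mult)

lemma sin_lower_half:
  assumes "0 \<le> x" "x \<le> pi / 2"
  shows "x / 3 \<le> sin x"
proof -
  have "\<bar>sin x - (\<Sum>m<3. sin_coeff m * x ^ m)\<bar> \<le> inverse (fact 3) * \<bar>x\<bar> ^ 3"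
    by (rule Maclaurin_sin_bound)
  moreover have "(\<Sum>m<3. sin_coeff m * x ^ m) = x"
    by (simp add: eval_nat_numeral sin_coeff_def)
  ultimately have "x - x^3 / 6 \<le> sin x" using assms by (simp add: eval_nat_numeral abs_if split: if_splits)
  moreover have "x^2 \<le> 4"
  proof -
    have "x \<le> 2" using assms pi_less_4 by linarith
    thus ?thesis using assms power_mono[of x 2 2] by simp
  qed
  then have "x*x*x \<le> 4*x" using mult_right_mono[of "x*x" 4 x] assms by (simp add: power2_eq_square)
  then have "x^3 / 6 \<le> 2 * x / 3" by (simp add: power3_eq_cube)
  ultimately show ?thesis by linarith
qed

lemma sin_lower_v:
  assumes "0 < v" "v < 1"
  shows "min v (1 - v) \<le> sin (pi * v)"
proof (cases "v \<le> 1/2")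
  case True
  have "pi * v / 3 \<le> sin (pi * v)" using True assms by (intro sin_lower_half) auto
  moreover have "v \<le> pi * v / 3"
  proof -
    have "v * 1 \<le> v * (pi / 3)" using assms pi_gt3 by (intro mult_left_mono) auto
    thus ?thesis by (simp add: mult.commute)
  qed
  ultimately show ?thesis by linarith
next
  case False
  have "sin (pi * v) = sin (pi * (1 - v))" by (simp add: right_diff_distrib sin_diff)
  moreover have "pi * (1 - v) / 3 \<le> sin (pi * (1 - v))" using False assms by (intro sin_lower_half) auto
  moreover have "1 - v \<le> pi * (1 - v) / 3"
  proof -
    have "(1 - v) * 1 \<le> (1 - v) * (pi / 3)" using assms pi_gt3 by (intro mult_left_mono) auto
    thus ?thesis by (simp add: mult.commute)
  qed
  ultimately show ?thesis by linarith
qed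

lemma sum_shift_periodic_nat:
  fixes \<phi> :: "int \<Rightarrow> real"
  assumes per: "\<And>a. \<phi> (a + int M) = \<phi> a"
  shows "(\<Sum>a<M. \<phi> (int a + int j)) = (\<Sum>a<M. \<phi> (int a))"
proof (induction j)
  case 0 then show ?case by simp
next
  case (Suc j)
  have "(\<Sum>a<Suc M. \<phi> (int a + int j)) = \<phi> (int j) + (\<Sum>a<M. \<phi> (int (Suc a) + int j))"
    by (subst sum.lessThan_Suc_shift) simp
  moreover have "(\<Sum>a<Suc M. \<phi> (int a + int j)) = (\<Sum>a<M. \<phi> (int a + int j)) + \<phi> (int M + int j)"
    by simp
  moreover have "\<phi> (int M + int j) = \<phi> (int j)" using per[of "int j"] by (simp add: add.commute)
  moreover have "(\<Sum>a<M. \<phi> (int (Suc a) + int j)) = (\<Sum>a<M. \<phi> (int a + int (Suc j)))"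
    by (simp add: add_ac)
  ultimately show ?case using Suc by linarith
qed

lemma sum_shift_periodic:
  fixes \<phi> :: "int \<Rightarrow> real"
  assumes per: "\<And>a. \<phi> (a + int M) = \<phi> a"
  shows "(\<Sum>a<M. \<phi> (int a + j)) = (\<Sum>a<M. \<phi> (int a))"
proof -
  have perm: "\<phi> (a + int M * int m) = \<phi> a" for a m
  proof (induction m arbitrary: a)
    case 0 then show ?case by simp
  next
    case (Suc m)
    have "\<phi> (a + int M * int (Suc m)) = \<phi> ((a + int M * int m) + int M)" by (simp add: algebra_simps)
    also have "\<dots> = \<phi> (a + int M * int m)" by (rule per)
    finally show ?case using Suc by simp
  qed
  obtain m :: nat where m: "j + int M * int m \<ge> 0 \<or> M = 0"
  proof (cases "M = 0")
    case False
    then have "j + int M * int (nat \<bar>j\<bar>) \<ge> 0"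
      by (smt (verit) mult_less_cancel_right2 of_nat_0_less_iff of_nat_less_0_iff int_nat_eq zero_less_iff_neq_zero abs_ge_zero)
    then show ?thesis using that by blast
  qed (use that in blast)
  show ?thesis
  proof (cases "M = 0")
    case True then show ?thesis by simp
  next
    case False
    then have j0: "j + int M * int m \<ge> 0" using m by auto
    have "(\<Sum>a<M. \<phi> (int a + j)) = (\<Sum>a<M. \<phi> (int a + int (nat (j + int M * int m))))"
      using j0 perm by (intro sum.cong refl) (metis add.assoc perm nat_0_le)
    also have "\<dots> = (\<Sum>a<M. \<phi> (int a))" by (rule sum_shift_periodic_nat[where \<phi>=\<phi>, OF per])
    finally show ?thesis .
  qed
qed

lemma harm_le_ln: "harm n \<le> 1 + ln (real n :: real)"
proof (cases "n = 0")
  case True then show ?thesis by (simp add: harm_def)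
next
  case False
  have "harm n - ln (real n) \<le> harm 1 - ln (real 1 :: real)"
    using False by (intro euler_mascheroni_sequence_decreasing) auto
  thus ?thesis by (simp add: harm_def)
qed

lemma orth:
  assumes "n < M" "n' < M"
  shows "(\<Sum>a<M. ee (real a * ((real n' - real n) / real M))) = (if n = n' then of_nat M else 0)"
proof (cases "n = n'")
  case True then show ?thesis by simp
next
  case False
  define w where "w = ee ((real n' - real n) / real M)"
  have M: "M > 0" using assms by auto
  have ni: "(real n' - real n) / real M \<notin> \<int>"
  proof
    assume "(real n' - real n) / real M \<in> \<int>"
    then obtain k :: int where k: "(real n' - real n) / real M = of_int k" by (auto elim: Ints_cases)
    then have "real n' - real n = of_int k * real M" using M by (simp add: field_simps)
    then have e: "int n' - int n = k * int M" by (metis of_int_eq_iff of_int_diff of_int_mult of_int_of_nat_eq)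
    have "\<bar>int n' - int n\<bar> < int M" using assms by auto
    then have "\<bar>k\<bar> * int M < int M" using e by (simp add: abs_mult)
    then have "k = 0" using M by (simp add: mult_less_cancel_right2)
    then show False using e False by simp
  qed
  then have w1: "w \<noteq> 1" unfolding w_def using ee_eq_1_iff by blast
  have "(\<Sum>a<M. ee (real a * ((real n' - real n) / real M))) = (\<Sum>a<M. w ^ a)"
    unfolding w_def by (simp only: ee_nat_mult)
  also have "\<dots> = (w ^ M - 1) / (w - 1)" using w1 by (rule geometric_sum)
  also have "w ^ M = 1"
  proof -
    have "w ^ M = ee (real M * ((real n' - real n) / real M))" by (simp only: w_def ee_nat_mult)
    also have "real M * ((real n' - real n) / real M) = real n' - real n" using M by simp
    finally show ?thesis by (simp add: ee_int)
  qed
  finally show ?thesis using False by simp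
qed

lemma ee_combine: "ee (real n' * (real a / real M)) * ee (real n * (y - real a / real M))
          = ee (real n * y) * ee (real a * ((real n' - real n) / real M))"
  unfolding ee_add[symmetric] by (rule arg_cong[where f=ee]) (simp add: algebra_simps diff_divide_distrib)

lemma interpolation:
  assumes M: "M > 0"
  shows "(\<Sum>n<M. cf n * ee (real n * y)) =
     (\<Sum>a<M. (\<Sum>n'<M. cf n' * ee (real n' * (real a / real M))) * Dk M (y - real a / real M)) / of_nat M"
proof -
  have "(\<Sum>a<M. (\<Sum>n'<M. cf n' * ee (real n' * (real a / real M))) * Dk M (y - real a / real M))
      = (\<Sum>a<M. \<Sum>n'<M. \<Sum>n<M. cf n' * ee (real n * y) * ee (real a * ((real n' - real n) / real M)))"
  proof (rule sum.cong[OF refl])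
    fix a assume "a \<in> {..<M}"
    show "(\<Sum>n'<M. cf n' * ee (real n' * (real a / real M))) * Dk M (y - real a / real M)
      = (\<Sum>n'<M. \<Sum>n<M. cf n' * ee (real n * y) * ee (real a * ((real n' - real n) / real M)))"
      unfolding Dk_def sum_product
      by (intro sum.cong refl) (simp only: mult.assoc ee_combine)
  qed
  also have "\<dots> = (\<Sum>n'<M. \<Sum>n<M. \<Sum>a<M. cf n' * ee (real n * y) * ee (real a * ((real n' - real n) / real M)))"
    by (subst sum.swap) (subst (2) sum.swap, rule refl)
  also have "\<dots> = (\<Sum>n'<M. \<Sum>n<M. cf n' * ee (real n * y) * (if n = n' then of_nat M else 0))"
  proof (intro sum.cong refl)
    fix n' n assume "n' \<in> {..<M}" "n \<in> {..<M}"
    then have o: "(\<Sum>a<M. ee (real a * ((real n' - real n) / real M))) = (if n = n' then of_nat M else 0)"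
      by (intro orth) auto
    show "(\<Sum>a<M. cf n' * ee (real n * y) * ee (real a * ((real n' - real n) / real M))) =
         cf n' * ee (real n * y) * (if n = n' then of_nat M else 0)"
      by (simp only: sum_distrib_left[symmetric] o)
  qed
  also have "\<dots> = (\<Sum>n'<M. cf n' * ee (real n' * y) * of_nat M)"
    by (intro sum.cong refl) (simp add: if_distrib cong: if_cong)
  finally show ?thesis using M by (simp add: sum_distrib_right[symmetric])
qed

lemma Dk_term_bound:
  assumes M: "M > 0" and a: "a < M" and th: "0 \<le> \<theta>" "\<theta> < 1"
  shows "cmod (Dk M ((\<theta> - real a) / real M)) \<le>
      (if a = 0 then real M else 2 * real M / real a + real M / real (M - a))"
proof (cases "a \<le> 1")
  case True
  have "cmod (Dk M ((\<theta> - real a) / real M)) \<le> real M" by (rule Dk_bound)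
  moreover have "real M \<le> 2 * real M / real a + real M / real (M - a)" if "a = 1"
    using that M a by (simp add: divide_nonneg_nonneg)
  ultimately show ?thesis using True by (cases "a = 0") auto
next
  case False
  define v where "v = (real a - \<theta>) / real M"
  have v0: "0 < v" unfolding v_def using False th M by (auto simp: field_simps)
  have v1: "v < 1" unfolding v_def using a th M by (auto simp: field_simps)
  have s: "min v (1 - v) \<le> sin (pi * v)" using v0 v1 by (rule sin_lower_v)
  have mpos: "0 < min v (1 - v)" using v0 v1 by auto
  have e: "pi * ((\<theta> - real a) / real M) = - (pi * v)" unfolding v_def
    by (metis minus_diff_eq minus_divide_left mult_minus_right)
  have sne: "sin (pi * ((\<theta> - real a) / real M)) \<noteq> 0" unfolding e using s mpos by auto
  have "cmod (Dk M ((\<theta> - real a) / real M)) \<le> 1 / \<bar>sin (pi * ((\<theta> - real a) / real M))\<bar>"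
    using sne by (rule Dk_bound2)
  also have "\<dots> = 1 / sin (pi * v)"
  proof -
    have "0 < sin (pi * v)" using s mpos by linarith
    thus ?thesis unfolding e by simp
  qed
  also have "\<dots> \<le> 1 / min v (1 - v)" using s mpos by (intro divide_left_mono) auto
  also have "\<dots> \<le> 1 / v + 1 / (1 - v)" using v0 v1 by (auto simp: min_def)
  also have "1 / v \<le> 2 * real M / real a"
  proof -
    have "1 / v = real M / (real a - \<theta>)" unfolding v_def by simp
    also have "\<dots> \<le> real M / (real a / 2)" using False th M by (intro divide_left_mono) auto
    finally show ?thesis by (simp add: mult.commute)
  qed
  also have "1 / (1 - v) \<le> real M / real (M - a)"
  proof -
    have "1 - v = (real M - real a + \<theta>) / real M" unfolding v_def using M by (simp add: field_simps)
    then have "1 / (1 - v) = real M / (real M - real a + \<theta>)" by simp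
    also have "\<dots> \<le> real M / (real M - real a)" using a th M by (intro divide_left_mono) auto
    finally show ?thesis using a by (simp add: of_nat_diff)
  qed
  finally show ?thesis using False by simp
qed

lemma harm_sum1: "(\<Sum>a<n. 1 / real (Suc a)) = (harm n :: real)"
  unfolding harm_def One_nat_def sum.atLeast1_atMost_eq by (simp add: inverse_eq_divide)

lemma harm_sum2: "(\<Sum>a<n. 1 / real (n - a)) = (harm n :: real)"
proof -
  have "(\<Sum>a<n. 1 / real (n - a)) = (\<Sum>a<n. 1 / real (Suc (n - Suc a)))"
    by (intro sum.cong refl) (simp add: Suc_diff_Suc)
  also have "\<dots> = (\<Sum>a<n. 1 / real (Suc a))"
    by (rule sum.nat_diff_reindex)
  finally show ?thesis using harm_sum1 by simp
qed

lemma leb_sum: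
  assumes M: "M > 0"
  shows "(\<Sum>a<M. cmod (Dk M (y - real a / real M))) \<le> real M * (4 + 3 * ln (real M))"
proof -
  define \<phi> :: "int \<Rightarrow> real" where "\<phi> a = cmod (Dk M (y - of_int a / real M))" for a
  have per: "\<phi> (a + int M) = \<phi> a" for a
  proof -
    have "Dk M (y - of_int (a + int M) / real M) = Dk M (y - of_int a / real M)"
      by (rule Dk_periodic) (use M in \<open>simp add: field_simps\<close>)
    thus ?thesis unfolding \<phi>_def by simp
  qed
  define j0 where "j0 = \<lfloor>real M * y\<rfloor>"
  define \<theta> where "\<theta> = real M * y - of_int j0"
  have th: "0 \<le> \<theta>" "\<theta> < 1" unfolding \<theta>_def j0_def by linarith+
  have "(\<Sum>a<M. cmod (Dk M (y - real a / real M))) = (\<Sum>a<M. \<phi> (int a))"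
    unfolding \<phi>_def by simp
  also have "\<dots> = (\<Sum>a<M. \<phi> (int a + j0))"
    by (rule sum_shift_periodic[where \<phi>=\<phi>, OF per, symmetric])
  also have "\<dots> = (\<Sum>a<M. cmod (Dk M ((\<theta> - real a) / real M)))"
  proof (intro sum.cong refl)
    fix a
    have "y - of_int (int a + j0) / real M = (\<theta> - real a) / real M"
      unfolding \<theta>_def using M by (simp add: field_simps)
    thus "\<phi> (int a + j0) = cmod (Dk M ((\<theta> - real a) / real M))" unfolding \<phi>_def by simp
  qed
  also have "\<dots> \<le> (\<Sum>a<M. (if a = 0 then real M else 2 * real M / real a + real M / real (M - a)))"
    by (intro sum_mono Dk_term_bound[OF M _ th]) auto
  also have "\<dots> \<le> real M * (4 + 3 * ln (real M))"
  proof -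
    obtain M' where M': "M = Suc M'" using M by (cases M) auto
    have "(\<Sum>a<M. (if a = 0 then real M else 2 * real M / real a + real M / real (M - a)))
        = real M + (\<Sum>a<M'. 2 * real M / real (Suc a) + real M / real (M' - a))"
      unfolding M' by (subst sum.lessThan_Suc_shift) simp
    also have "\<dots> = real M + 2 * real M * (\<Sum>a<M'. 1 / real (Suc a)) + real M * (\<Sum>a<M'. 1 / real (M' - a))"
      by (simp add: sum.distrib sum_distrib_left)
    also have "\<dots> = real M + 3 * real M * harm M'"
      unfolding harm_sum1 harm_sum2 by simp
    also have "\<dots> \<le> real M + 3 * real M * (1 + ln (real M))"
    proof -
      have "harm M' \<le> 1 + ln (real M')" by (rule harm_le_ln)
      also have "\<dots> \<le> 1 + ln (real M)"
        using M' by (cases "M' = 0") auto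
      finally show ?thesis using M by simp
    qed
    finally show ?thesis by (simp add: algebra_simps)
  qed
  finally show ?thesis .
qed

lemma sampling:
  assumes M: "M > 0" and B: "\<And>a. a < M \<Longrightarrow> cmod (\<Sum>n<M. cf n * ee (real n * (real a / real M))) \<le> B"
  shows "cmod (\<Sum>n<M. cf n * ee (real n * y)) \<le> (4 + 3 * ln (real M)) * B"
proof -
  have B0: "0 \<le> B" using B[of 0] M by (meson norm_ge_zero order_trans)
  have "cmod (\<Sum>n<M. cf n * ee (real n * y)) =
     cmod (\<Sum>a<M. (\<Sum>n'<M. cf n' * ee (real n' * (real a / real M))) * Dk M (y - real a / real M)) / real M"
    by (subst interpolation[OF M, of cf y]) (simp add: norm_divide)
  also have "\<dots> \<le> (\<Sum>a<M. B * cmod (Dk M (y - real a / real M))) / real M"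
  proof (intro divide_right_mono)
    show "cmod (\<Sum>a<M. (\<Sum>n'<M. cf n' * ee (real n' * (real a / real M))) * Dk M (y - real a / real M))
       \<le> (\<Sum>a<M. B * cmod (Dk M (y - real a / real M)))"
      apply (rule order_trans[OF norm_sum sum_mono])
      apply (simp only: norm_mult)
      apply (rule mult_right_mono)
       apply (rule B)
       apply simp
      apply simp
      done
  qed simp
  also have "\<dots> = B * (\<Sum>a<M. cmod (Dk M (y - real a / real M))) / real M"
    by (simp add: sum_distrib_left)
  also have "\<dots> \<le> B * (real M * (4 + 3 * ln (real M))) / real M"
    by (intro divide_right_mono mult_left_mono leb_sum M B0) simp
  finally show ?thesis using M by (simp add: mult.commute)
qed

lemma cnj_ee: "cnj (ee t) = ee (- t)"
  unfolding ee_def by (simp add: exp_cnj)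

lemma ee_combine2: "ee (real n * (real a / real M)) * cnj (ee (real n' * (real a / real M)))
          = ee (real a * ((real n - real n') / real M))"
  unfolding cnj_ee ee_add[symmetric] by (rule arg_cong[where f=ee]) (simp add: algebra_simps diff_divide_distrib)

lemma parseval:
  assumes M: "M > 0"
  shows "(\<Sum>a<M. (cmod (\<Sum>n<M. cf n * ee (real n * (real a / real M))))^2) = real M * (\<Sum>n<M. (cmod (cf n))^2)"
proof -
  have "complex_of_real (\<Sum>a<M. (cmod (\<Sum>n<M. cf n * ee (real n * (real a / real M))))^2)
    = (\<Sum>a<M. (\<Sum>n<M. cf n * ee (real n * (real a / real M))) * cnj (\<Sum>n<M. cf n * ee (real n * (real a / real M))))"
    by (simp only: of_real_sum complex_norm_square)
  also have "\<dots> = (\<Sum>a<M. \<Sum>n<M. \<Sum>n'<M. cf n * cnj (cf n') * ee (real a * ((real n - real n') / real M)))"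
  proof (rule sum.cong[OF refl])
    fix a
    show "(\<Sum>n<M. cf n * ee (real n * (real a / real M))) * cnj (\<Sum>n<M. cf n * ee (real n * (real a / real M)))
      = (\<Sum>n<M. \<Sum>n'<M. cf n * cnj (cf n') * ee (real a * ((real n - real n') / real M)))"
      unfolding cnj_sum complex_cnj_mult sum_product
    proof (intro sum.cong refl)
      fix n n'
      show "cf n * ee (real n * (real a / real M)) * (cnj (cf n') * cnj (ee (real n' * (real a / real M))))
         = cf n * cnj (cf n') * ee (real a * ((real n - real n') / real M))"
        using ee_combine2[of n a M n'] by (simp add: mult_ac)
    qed
  qed
  also have "\<dots> = (\<Sum>n<M. \<Sum>n'<M. \<Sum>a<M. cf n * cnj (cf n') * ee (real a * ((real n - real n') / real M)))"
    by (subst sum.swap) (subst (2) sum.swap, rule refl)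
  also have "\<dots> = (\<Sum>n<M. \<Sum>n'<M. cf n * cnj (cf n') * (if n' = n then of_nat M else 0))"
  proof (intro sum.cong refl)
    fix n' n assume "n' \<in> {..<M}" "n \<in> {..<M}"
    then have o: "(\<Sum>a<M. ee (real a * ((real n - real n') / real M))) = (if n' = n then of_nat M else 0)"
      by (intro orth) auto
    show "(\<Sum>a<M. cf n * cnj (cf n') * ee (real a * ((real n - real n') / real M))) =
         cf n * cnj (cf n') * (if n' = n then of_nat M else 0)"
      by (simp only: sum_distrib_left[symmetric] o)
  qed
  also have "\<dots> = (\<Sum>n<M. cf n * cnj (cf n) * of_nat M)"
    by (intro sum.cong refl) (simp add: if_distrib cong: if_cong)
  also have "\<dots> = (\<Sum>n<M. of_nat M * complex_of_real ((cmod (cf n))^2))"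
    by (intro sum.cong refl) (subst complex_norm_square, simp add: mult.commute)
  also have "\<dots> = complex_of_real (real M * (\<Sum>n<M. (cmod (cf n))^2))"
    by (simp only: of_real_mult of_real_sum sum_distrib_left of_real_of_nat_eq)
  finally show ?thesis by (simp only: of_real_eq_iff)
qed

lemma Phi_large:
  assumes N: "N > 0"
  shows "\<exists>a<N. sqrt (real N) \<le> cmod (Phi q c N (real a / real N))"
proof (rule ccontr)
  assume "\<not> ?thesis"
  then have lt: "\<And>a. a < N \<Longrightarrow> cmod (Phi q c N (real a / real N)) < sqrt (real N)" by force
  have "(\<Sum>a<N. (cmod (\<Sum>n<N. ee (c * real (digit_sum q n)) * ee (real n * (real a / real N))))^2)
      = real N * (\<Sum>n<N. (cmod (ee (c * real (digit_sum q n))))^2)"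
    by (rule parseval[OF N])
  also have "\<dots> = real N * real N" by simp
  finally have eq: "(\<Sum>a<N. (cmod (Phi q c N (real a / real N)))^2) = real N * real N"
    by (simp only: Phi_ee)
  have "(\<Sum>a<N. (cmod (Phi q c N (real a / real N)))^2) < (\<Sum>a<N. (sqrt (real N))^2)"
  proof (rule sum_strict_mono)
    fix a assume "a \<in> {..<N}"
    then show "(cmod (Phi q c N (real a / real N)))^2 < (sqrt (real N))^2"
      using lt by (intro power_strict_mono) auto
  qed (use N in auto)
  also have "\<dots> = real N * real N" by simp
  finally show False using eq by simp
qed

lemma sampling_Pk:
  assumes q: "2 \<le> q" and L: "L > 0"
    and B: "\<And>a. a < q ^ L - 1 \<Longrightarrow> Pk q c L (real a / real (q ^ L - 1)) \<le> B"
  shows "Pk q c L y \<le> 2 + (4 + 3 * ln (real (q ^ L - 1))) * B"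
proof -
  define M where "M = q ^ L - 1"
  have qL: "q ^ L \<ge> 2"
  proof -
    have "q ^ 1 \<le> q ^ L" using L q by (intro power_increasing) auto
    thus ?thesis using q by simp
  qed
  have M: "M > 0" unfolding M_def using qL by simp
  have SM: "q ^ L = Suc M" unfolding M_def using qL by simp
  define b where "b n = ee (c * real (digit_sum q n))" for n
  define cf where "cf n = b n + (if n = 0 then b M else 0)" for n
  have Phi_eq: "Phi q c (q ^ L) x = (\<Sum>n<M. cf n * ee (real n * x)) + b M * (ee (real M * x) - 1)" for x
  proof -
    have "Phi q c (q ^ L) x = (\<Sum>n<M. b n * ee (real n * x)) + b M * ee (real M * x)"
      unfolding SM Phi_ee b_def by simp
    moreover have "(\<Sum>n<M. cf n * ee (real n * x)) = (\<Sum>n<M. b n * ee (real n * x) + (if n = 0 then b M else 0))"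
      by (intro sum.cong refl) (simp add: cf_def distrib_right)
    moreover have "\<dots> = (\<Sum>n<M. b n * ee (real n * x)) + b M" using M by (simp add: sum.distrib)
    ultimately show ?thesis by (simp add: algebra_simps)
  qed
  have samp: "cmod (\<Sum>n<M. cf n * ee (real n * (real a / real M))) \<le> B" if "a < M" for a
  proof -
    have "ee (real M * (real a / real M)) = 1" using M by simp
    then have "cmod (\<Sum>n<M. cf n * ee (real n * (real a / real M))) = cmod (Phi q c (q ^ L) (real a / real M))"
      using Phi_eq[of "real a / real M"] by simp
    also have "\<dots> = Pk q c L (real a / real M)" using Phi_pow[OF q] by simp
    also have "\<dots> \<le> B" using B that unfolding M_def by simp
    finally show ?thesis .
  qed
  have "Pk q c L y = cmod (Phi q c (q ^ L) y)" using Phi_pow[OF q] by simp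
  also have "\<dots> \<le> cmod (\<Sum>n<M. cf n * ee (real n * y)) + cmod (b M * (ee (real M * y) - 1))"
    unfolding Phi_eq by (rule norm_triangle_ineq)
  also have "cmod (b M * (ee (real M * y) - 1)) \<le> 2"
  proof -
    have "cmod (ee (real M * y) - 1) \<le> cmod (ee (real M * y)) + cmod (1::complex)" by (rule norm_triangle_ineq4)
    thus ?thesis by (simp add: norm_mult b_def)
  qed
  also have "cmod (\<Sum>n<M. cf n * ee (real n * y)) \<le> (4 + 3 * ln (real M)) * B"
    by (rule sampling[OF M samp])
  finally show ?thesis unfolding M_def by simp
qed

definition u_fun :: "nat \<Rightarrow> real \<Rightarrow> real \<Rightarrow> ennreal" where
  "u_fun q c x = e2ennreal (ereal (ln (real q)) - f_c q c x)"

lemma upper_bdd_u: "upper_bdd_integral M (ln (real q)) (f_c q c) = ereal (ln (real q)) - enn2ereal (\<integral>\<^sup>+ x. u_fun q c x \<partial>M)"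
  unfolding upper_bdd_integral_def u_fun_def by simp

lemma f_c_meas_circle: "2 \<le> q \<Longrightarrow> f_c q c \<in> borel_measurable circle_borel"
  unfolding circle_borel_def by (rule measurable_restrict_space1[OF f_c_meas])

lemma u_meas: "2 \<le> q \<Longrightarrow> u_fun q c \<in> borel_measurable circle_borel"
proof -
  assume q: "2 \<le> q"
  note [measurable] = f_c_meas_circle[OF q]
  show ?thesis unfolding u_fun_def by measurable
qed

lemma u_pos: "2 \<le> q \<Longrightarrow> Gf q c x > 0 \<Longrightarrow> u_fun q c x = ennreal (ln (real q) - ln (Gf q c x))"
  unfolding u_fun_def by (simp add: f_c_Gf)

lemma u_zero: "2 \<le> q \<Longrightarrow> Gf q c x = 0 \<Longrightarrow> u_fun q c x = top"
  unfolding u_fun_def by (simp add: f_c_Gf)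

lemma ln_Gf_le: "2 \<le> q \<Longrightarrow> Gf q c x > 0 \<Longrightarrow> ln (Gf q c x) \<le> ln (real q)"
  using Gf_le[of q c x] by simp

lemma sum_u_ge:
  assumes q: "2 \<le> q" and x: "x \<in> {0..<1}" and Bd: "0 < Bd" "Pk q c k x \<le> Bd"
  shows "ennreal (real k * ln (real q) - ln Bd) \<le> (\<Sum>j<k. u_fun q c ((times_q_map q ^^ j) x))"
proof (cases "\<exists>j<k. Gf q c ((times_q_map q ^^ j) x) = 0")
  case True
  then obtain j where j: "j < k" "Gf q c ((times_q_map q ^^ j) x) = 0" by blast
  have "u_fun q c ((times_q_map q ^^ j) x) \<le> (\<Sum>j<k. u_fun q c ((times_q_map q ^^ j) x))"
    using j by (intro member_le_sum) auto
  then have "(\<Sum>j<k. u_fun q c ((times_q_map q ^^ j) x)) = top" using u_zero[OF q j(2)] by (simp only: top_unique)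
  then show ?thesis by (metis top_greatest)
next
  case False
  then have G: "\<And>j. j < k \<Longrightarrow> Gf q c ((times_q_map q ^^ j) x) > 0"
    using Gf_nonneg by (metis less_eq_real_def)
  have "(\<Sum>j<k. u_fun q c ((times_q_map q ^^ j) x)) = (\<Sum>j<k. ennreal (ln (real q) - ln (Gf q c ((times_q_map q ^^ j) x))))"
    using G u_pos[OF q] by (intro sum.cong refl) auto
  also have "\<dots> = ennreal (\<Sum>j<k. ln (real q) - ln (Gf q c ((times_q_map q ^^ j) x)))"
    using G ln_Gf_le[OF q] by (intro sum_ennreal) auto
  also have "(\<Sum>j<k. ln (real q) - ln (Gf q c ((times_q_map q ^^ j) x))) = real k * ln (real q) - ln (Pk q c k x)"
  proof -
    have "Pk q c k x = (\<Prod>j<k. Gf q c ((times_q_map q ^^ j) x))"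
      unfolding Pk_def using Gf_iter[OF x] by simp
    moreover have "ln (\<Prod>j<k. Gf q c ((times_q_map q ^^ j) x)) = (\<Sum>j<k. ln (Gf q c ((times_q_map q ^^ j) x)))"
      apply (rule ln_prod)
       apply simp
      using G by (metis lessThan_iff less_irrefl)
    ultimately have "ln (Pk q c k x) = (\<Sum>j<k. ln (Gf q c ((times_q_map q ^^ j) x)))" by simp
    thus ?thesis by (simp add: sum_subtractf)
  qed
  finally have eq: "(\<Sum>j<k. u_fun q c ((times_q_map q ^^ j) x)) = ennreal (real k * ln (real q) - ln (Pk q c k x))" .
  have Ppos: "Pk q c k x > 0"
  proof -
    have "Pk q c k x = (\<Prod>j<k. Gf q c ((times_q_map q ^^ j) x))"
      unfolding Pk_def using Gf_iter[OF x] by simp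
    thus ?thesis using G by (simp, intro prod_pos) auto
  qed
  have "ln (Pk q c k x) \<le> ln Bd" using Ppos Bd by simp
  then show ?thesis unfolding eq by (intro ennreal_leI) simp
qed

lemma inv_sets: "M \<in> invariant_measures q \<Longrightarrow> sets M = sets circle_borel"
  by (simp add: invariant_measures_def)

lemma inv_space: "M \<in> invariant_measures q \<Longrightarrow> space M = {0..<1}"
  using inv_sets sets_eq_imp_space_eq space_circle by metis

lemma inv_meas: "M \<in> invariant_measures q \<Longrightarrow> times_q_map q \<in> M \<rightarrow>\<^sub>M M"
  by (simp add: invariant_measures_def)

lemma inv_iter:
  assumes M: "M \<in> invariant_measures q"
  shows "distr M M (times_q_map q ^^ j) = M"
proof (induction j)
  case 0
  then show ?case using distr_id2[of M] by (simp add: id_def)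
next
  case (Suc j)
  have T: "times_q_map q \<in> M \<rightarrow>\<^sub>M M" by (rule inv_meas[OF M])
  have "distr M M (times_q_map q ^^ Suc j) = distr M M ((times_q_map q ^^ j) \<circ> times_q_map q)"
    by (simp only: funpow_Suc_right)
  also have "\<dots> = distr (distr M M (times_q_map q)) M (times_q_map q ^^ j)"
    by (rule distr_distr[symmetric]) (auto intro: measurable_compose_n T)
  also have "distr M M (times_q_map q) = M" using M by (simp add: invariant_measures_def)
  finally show ?case using Suc by simp
qed

lemma upper_bound_inv:
  assumes q: "2 \<le> q" and M: "M \<in> invariant_measures q" and k: "k > 0" and Bd: "0 < Bd"
    and P: "\<And>x. x \<in> {0..<1} \<Longrightarrow> Pk q c k x \<le> Bd"
  shows "upper_bdd_integral M (ln (real q)) (f_c q c) \<le> ereal (ln Bd / real k)"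
proof -
  interpret prob_space M using M by (simp add: invariant_measures_def)
  define I where "I = (\<integral>\<^sup>+ x. u_fun q c x \<partial>M)"
  have um: "u_fun q c \<in> borel_measurable M"
    using u_meas[OF q] measurable_cong_sets[OF inv_sets[OF M] refl] by blast
  have T: "times_q_map q \<in> M \<rightarrow>\<^sub>M M" by (rule inv_meas[OF M])
  have Tj: "(times_q_map q ^^ j) \<in> M \<rightarrow>\<^sub>M M" for j by (rule measurable_compose_n[OF T])
  have each: "(\<integral>\<^sup>+ x. u_fun q c ((times_q_map q ^^ j) x) \<partial>M) = I" for j
  proof -
    have "(\<integral>\<^sup>+ x. u_fun q c ((times_q_map q ^^ j) x) \<partial>M) = (\<integral>\<^sup>+ x. u_fun q c x \<partial>distr M M (times_q_map q ^^ j))"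
      by (rule nn_integral_distr[symmetric]) (use Tj um in auto)
    thus ?thesis unfolding inv_iter[OF M] I_def .
  qed
  have "(\<integral>\<^sup>+ x. (\<Sum>j<k. u_fun q c ((times_q_map q ^^ j) x)) \<partial>M) = (\<Sum>j<k. I)"
    by (subst nn_integral_sum) (auto intro: measurable_compose[OF Tj um] simp: each)
  also have "\<dots> = of_nat k * I" by simp
  finally have eqk: "(\<integral>\<^sup>+ x. (\<Sum>j<k. u_fun q c ((times_q_map q ^^ j) x)) \<partial>M) = of_nat k * I" .
  have "(\<integral>\<^sup>+ x. ennreal (real k * ln (real q) - ln Bd) \<partial>M) \<le> (\<integral>\<^sup>+ x. (\<Sum>j<k. u_fun q c ((times_q_map q ^^ j) x)) \<partial>M)"
    by (intro nn_integral_mono sum_u_ge[OF q _ Bd P]) (auto simp: inv_space[OF M])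
  then have le: "ennreal (real k * ln (real q) - ln Bd) \<le> of_nat k * I"
    unfolding eqk by (simp add: emeasure_space_1)
  have le2: "ereal (real k * ln (real q) - ln Bd) \<le> ereal (real k) * enn2ereal I"
  proof (cases "real k * ln (real q) - ln Bd \<ge> 0")
    case True
    have "enn2ereal (ennreal (real k * ln (real q) - ln Bd)) \<le> enn2ereal (of_nat k * I)"
      using le unfolding less_eq_ennreal.rep_eq .
    moreover have "enn2ereal (of_nat k * I) = enn2ereal (of_nat k) * enn2ereal I"
      by (rule times_ennreal.rep_eq)
    moreover have "enn2ereal (of_nat k) = ereal (real k)"
      by (metis enn2ereal_ennreal ennreal_of_nat_eq_real_of_nat of_nat_0_le_iff)
    moreover have "enn2ereal (ennreal (real k * ln (real q) - ln Bd)) = ereal (real k * ln (real q) - ln Bd)"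
      using True by (rule enn2ereal_ennreal)
    ultimately show ?thesis by simp
  next
    case False
    have "ereal (real k * ln (real q) - ln Bd) \<le> 0" using False by simp
    also have "0 \<le> ereal (real k) * enn2ereal I" by simp
    finally show ?thesis .
  qed
  show ?thesis
  proof (cases "enn2ereal I")
    case (real t)
    have "real k * ln (real q) - ln Bd \<le> real k * t" using le2 real by simp
    then have "ln (real q) - ln Bd / real k \<le> t" using k by (simp add: field_simps)
    then have "ln (real q) - t \<le> ln Bd / real k" by simp
    then show ?thesis unfolding upper_bdd_u I_def[symmetric] real by simp
  next
    case PInf
    then show ?thesis unfolding upper_bdd_u I_def[symmetric] by simp
  next
    case MInf
    then show ?thesis using enn2ereal_nonneg[of I] by simp
  qed
qed

lemma card_shift_periodic:
  assumes "g L = g 0"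
  shows "card {j \<in> {..<L}. P (g (Suc j))} = card {j \<in> {..<L}. P (g j)}"
proof (cases L)
  case 0 then show ?thesis by simp
next
  case (Suc L')
  define \<phi> :: "nat \<Rightarrow> nat" where "\<phi> j = (if P (g j) then 1 else 0)" for j
  have c1: "card {j \<in> {..<L}. P (g (Suc j))} = (\<Sum>j<L. \<phi> (Suc j))"
    unfolding \<phi>_def card_eq_sum by (rule sum.inter_filter) simp
  have c2: "card {j \<in> {..<L}. P (g j)} = (\<Sum>j<L. \<phi> j)"
    unfolding \<phi>_def card_eq_sum by (rule sum.inter_filter) simp
  have "(\<Sum>j<L. \<phi> (Suc j)) = (\<Sum>j<L'. \<phi> (Suc j)) + \<phi> L" unfolding Suc by simp
  also have "\<phi> L = \<phi> 0" unfolding \<phi>_def using assms by simp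
  also have "(\<Sum>j<L'. \<phi> (Suc j)) + \<phi> 0 = (\<Sum>j<L. \<phi> j)"
    unfolding Suc sum.lessThan_Suc_shift by (rule add.commute)
  finally show ?thesis using c1 c2 by simp
qed

lemma periodic_measure:
  assumes q: "2 \<le> q" and L: "L > 0" and y: "y \<in> {0..<1}" and per: "(times_q_map q ^^ L) y = y"
  shows "distr (uniform_count_measure {..<L}) circle_borel (\<lambda>j. (times_q_map q ^^ j) y) \<in> invariant_measures q"
proof -
  define U where "U = uniform_count_measure {..<L}"
  define orb where "orb j = (times_q_map q ^^ j) y" for j
  define \<mu> where "\<mu> = distr U circle_borel orb"
  have orbm: "orb \<in> U \<rightarrow>\<^sub>M circle_borel"
    unfolding U_def
    by (subst measurable_cong_sets[OF sets_uniform_count_measure_count_space refl])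
       (auto simp: space_circle orb_def times_q_iter_in[OF y, simplified])
  have pU: "prob_space U" unfolding U_def using L by (intro prob_space_uniform_count_measure) auto
  have pmu: "prob_space \<mu>" unfolding \<mu>_def by (rule prob_space.prob_space_distr[OF pU orbm])
  have smu: "sets \<mu> = sets circle_borel" unfolding \<mu>_def by simp
  have Tm: "times_q_map q \<in> \<mu> \<rightarrow>\<^sub>M \<mu>"
    using times_q_meas measurable_cong_sets[OF smu smu] by blast
  have Tm2: "times_q_map q \<in> circle_borel \<rightarrow>\<^sub>M \<mu>"
    using times_q_meas measurable_cong_sets[OF refl smu] by blast
  have "distr \<mu> \<mu> (times_q_map q) = distr U \<mu> (times_q_map q \<circ> orb)"
    using distr_distr[OF Tm2 orbm] unfolding \<mu>_def[symmetric] .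
  also have "\<dots> = distr U circle_borel (times_q_map q \<circ> orb)"
    by (rule distr_cong) (auto simp: smu)
  also have "\<dots> = \<mu>"
    unfolding \<mu>_def
  proof (rule measure_eqI)
    show "sets (distr U circle_borel (times_q_map q \<circ> orb)) = sets (distr U circle_borel orb)" by simp
    fix A assume A: "A \<in> sets (distr U circle_borel (times_q_map q \<circ> orb))"
    have Tom: "times_q_map q \<circ> orb \<in> U \<rightarrow>\<^sub>M circle_borel"
      by (rule measurable_comp[OF orbm times_q_meas])
    have e1: "emeasure (distr U circle_borel (times_q_map q \<circ> orb)) A = emeasure U ((times_q_map q \<circ> orb) -` A \<inter> space U)"
      using A Tom by (intro emeasure_distr) auto
    have e2: "emeasure (distr U circle_borel orb) A = emeasure U (orb -` A \<inter> space U)"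
      using A orbm by (intro emeasure_distr) auto
    have sU: "space U = {..<L}" unfolding U_def by (simp add: space_uniform_count_measure)
    have set1: "(times_q_map q \<circ> orb) -` A \<inter> space U = {j \<in> {..<L}. orb (Suc j) \<in> A}"
      unfolding sU orb_def by auto
    have set2: "orb -` A \<inter> space U = {j \<in> {..<L}. orb j \<in> A}"
      unfolding sU by auto
    have cardeq: "card {j \<in> {..<L}. orb (Suc j) \<in> A} = card {j \<in> {..<L}. orb j \<in> A}"
      by (rule card_shift_periodic) (simp add: orb_def per)
    have "emeasure U {j \<in> {..<L}. orb (Suc j) \<in> A} = emeasure U {j \<in> {..<L}. orb j \<in> A}"
      unfolding U_def using cardeq by (subst (1 2) emeasure_uniform_count_measure) auto
    then have "emeasure U ((times_q_map q \<circ> orb) -` A \<inter> space U) = emeasure U (orb -` A \<inter> space U)"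
      unfolding set1 set2 .
    then show "emeasure (distr U circle_borel (times_q_map q \<circ> orb)) A = emeasure (distr U circle_borel orb) A"
      unfolding e1 e2 .
  qed
  finally have inv: "distr \<mu> \<mu> (times_q_map q) = \<mu>" .
  show ?thesis
    unfolding invariant_measures_def U_def[symmetric] orb_def[symmetric] \<mu>_def[symmetric]
    using smu pmu Tm inv by simp
qed

lemma one_div_mult_ennreal:
  assumes "L > 0" "0 \<le> r"
  shows "ennreal (1 / real L) * ennreal r = ennreal (r / real L)"
  using assms by (simp add: ennreal_mult[symmetric])

lemma periodic_integral:
  assumes q: "2 \<le> q" and L: "L > 0" and y: "y \<in> {0..<1}" and P: "Pk q c L y > 0"
  shows "upper_bdd_integral (distr (uniform_count_measure {..<L}) circle_borel (\<lambda>j. (times_q_map q ^^ j) y))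
            (ln (real q)) (f_c q c) = ereal (ln (Pk q c L y) / real L)"
proof -
  define U where "U = uniform_count_measure {..<L}"
  define orb where "orb j = (times_q_map q ^^ j) y" for j
  have orbm: "orb \<in> U \<rightarrow>\<^sub>M circle_borel"
    unfolding U_def
    by (subst measurable_cong_sets[OF sets_uniform_count_measure_count_space refl])
       (auto simp: space_circle orb_def times_q_iter_in[OF y, simplified])
  have um: "u_fun q c \<in> borel_measurable (distr U circle_borel orb)"
    using u_meas[OF q] by simp
  have Gorb: "Gf q c (orb j) = Gf q c (real q ^ j * y)" for j
    unfolding orb_def by (rule Gf_iter[OF y])
  have Gpos: "Gf q c (orb j) > 0" if "j < L" for j
  proof -
    have "Pk q c L y \<noteq> 0" using P by simp
    then have "Gf q c (real q ^ j * y) \<noteq> 0" using that unfolding Pk_def by auto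
    thus ?thesis using Gf_nonneg Gorb by (metis less_eq_real_def)
  qed
  have "(\<integral>\<^sup>+ x. u_fun q c x \<partial>distr U circle_borel orb) = (\<integral>\<^sup>+ j. u_fun q c (orb j) \<partial>U)"
    by (rule nn_integral_distr[OF orbm um])
  also have "\<dots> = (\<Sum>j<L. ennreal (1 / real L) * u_fun q c (orb j))"
    unfolding U_def uniform_count_measure_def by (simp add: nn_integral_point_measure_finite)
  also have "\<dots> = (\<Sum>j<L. ennreal ((ln (real q) - ln (Gf q c (orb j))) / real L))"
    using Gpos u_pos[OF q] ln_Gf_le[OF q] L by (intro sum.cong refl) (auto intro!: one_div_mult_ennreal)
  also have "\<dots> = ennreal (\<Sum>j<L. (ln (real q) - ln (Gf q c (orb j))) / real L)"
    using Gpos ln_Gf_le[OF q] L by (intro sum_ennreal) auto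
  also have "(\<Sum>j<L. (ln (real q) - ln (Gf q c (orb j))) / real L) = ln (real q) - ln (Pk q c L y) / real L"
  proof -
    have "ln (Pk q c L y) = (\<Sum>j<L. ln (Gf q c (orb j)))"
      unfolding Pk_def Gorb[symmetric]
      apply (rule ln_prod)
       apply simp
      using Gpos by (metis lessThan_iff less_irrefl)
    thus ?thesis using L by (simp add: sum_divide_distrib[symmetric] sum_subtractf diff_divide_distrib)
  qed
  finally have I: "(\<integral>\<^sup>+ x. u_fun q c x \<partial>distr U circle_borel orb) = ennreal (ln (real q) - ln (Pk q c L y) / real L)" .
  have nn: "0 \<le> ln (real q) - ln (Pk q c L y) / real L"
  proof -
    have "ln (Pk q c L y) = (\<Sum>j<L. ln (Gf q c (orb j)))"
      unfolding Pk_def Gorb[symmetric]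
      apply (rule ln_prod)
       apply simp
      using Gpos by (metis lessThan_iff less_irrefl)
    also have "\<dots> \<le> (\<Sum>j<L. ln (real q))"
      using Gpos ln_Gf_le[OF q] by (intro sum_mono) auto
    finally have "ln (Pk q c L y) \<le> real L * ln (real q)" by simp
    thus ?thesis using L by (simp add: field_simps)
  qed
  show ?thesis
    unfolding upper_bdd_u U_def[symmetric] orb_def[symmetric] I using nn by simp
qed

definition Fsup :: "nat \<Rightarrow> real \<Rightarrow> nat \<Rightarrow> real" where
  "Fsup q c N = (SUP x::real. cmod (Phi q c N x))"

lemma Phi_le_N: "cmod (Phi q c N x) \<le> real N"
proof -
  have "cmod (Phi q c N x) \<le> (\<Sum>n<N. cmod (ee (c * real (digit_sum q n)) * ee (real n * x)))"
    unfolding Phi_ee by (rule norm_sum)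
  thus ?thesis by (simp add: norm_mult)
qed

lemma Fsup_ge: "cmod (Phi q c N x) \<le> Fsup q c N"
  unfolding Fsup_def by (rule cSUP_upper) (auto intro!: bdd_aboveI[where M="real N"] Phi_le_N)

lemma Fsup_le: "(\<And>x. cmod (Phi q c N x) \<le> B) \<Longrightarrow> Fsup q c N \<le> B"
  unfolding Fsup_def by (rule cSUP_least) auto

lemma Fsup_nonneg: "0 \<le> Fsup q c N"
  using Fsup_ge[of q c N 0] norm_ge_zero order_trans by blast

lemma gamma_eq: "gamma_c q c = Inf {g. (\<lambda>N. Fsup q c N) \<in> O(\<lambda>N. real N powr g)}"
  unfolding gamma_c_def Fsup_def Phi_def ..

lemma eventually_real_gt: "eventually (\<lambda>N::nat. X < real N) sequentially"
proof -
  have "\<forall>N\<ge>nat \<lceil>X\<rceil> + 1. X < real N" by (auto, linarith)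
  thus ?thesis unfolding eventually_sequentially by blast
qed

lemma valid_ge_half:
  assumes V: "(\<lambda>N. Fsup q c N) \<in> O(\<lambda>N. real N powr g)"
  shows "1/2 \<le> g"
proof (rule ccontr)
  assume "\<not> 1/2 \<le> g"
  then have d: "0 < 1/2 - g" by simp
  obtain C where C: "C > 0" "eventually (\<lambda>N. norm (Fsup q c N) \<le> C * norm (real N powr g)) sequentially"
    using landau_o.bigE[OF V] by blast
  have "eventually (\<lambda>N. C powr (1 / (1/2 - g)) + 1 < real N) sequentially" by (rule eventually_real_gt)
  with C(2) obtain N where N: "norm (Fsup q c N) \<le> C * norm (real N powr g)" "C powr (1 / (1/2 - g)) + 1 < real N"
    using eventually_happens'[OF sequentially_bot] by (metis (mono_tags, lifting) eventually_conj)
  have Npos: "N > 0" using N(2) by (smt (verit) of_nat_0_less_iff powr_ge_zero)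
  obtain a where "sqrt (real N) \<le> cmod (Phi q c N (real a / real N))" using Phi_large[OF Npos] by blast
  then have "sqrt (real N) \<le> Fsup q c N" using Fsup_ge order_trans by blast
  also have "\<dots> \<le> C * real N powr g" using N(1) Fsup_nonneg by simp
  finally have le: "real N powr (1/2) \<le> C * real N powr g" using Npos by (simp add: powr_half_sqrt)
  have "C = (C powr (1 / (1/2 - g))) powr (1/2 - g)" using C d by (simp add: powr_powr)
  also have "\<dots> < real N powr (1/2 - g)"
    using N(2) d C by (intro powr_less_mono2) auto
  finally have "C * real N powr g < real N powr (1/2 - g) * real N powr g"
    using Npos by simp
  also have "\<dots> = real N powr (1/2)" using Npos by (simp add: powr_add[symmetric])
  finally show False using le by simp
qed

lemma pow_ge_self: "2 \<le> q \<Longrightarrow> k \<le> q ^ k"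
proof -
  assume "2 \<le> q"
  then have "(2::nat) ^ k \<le> q ^ k" by (rule power_mono) simp
  moreover have "k < 2 ^ k" by (rule less_exp)
  ultimately show ?thesis by (meson order.trans less_imp_le_nat)
qed

lemma valid_beta:
  assumes q: "2 \<le> q" and V: "(\<lambda>N. Fsup q c N) \<in> O(\<lambda>N. real N powr g)"
  shows "beta_c q c \<le> ereal (g * ln (real q))"
proof -
  obtain C where C: "C > 0" "eventually (\<lambda>N. norm (Fsup q c N) \<le> C * norm (real N powr g)) sequentially"
    using landau_o.bigE[OF V] by blast
  then obtain N0 where N0: "\<And>N. N \<ge> N0 \<Longrightarrow> norm (Fsup q c N) \<le> C * norm (real N powr g)"
    unfolding eventually_sequentially by blast
  have qpos: "0 < ln (real q)" using q by simp
  show ?thesis unfolding beta_c_def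
  proof (rule SUP_least)
    fix M assume M: "M \<in> invariant_measures q"
    have bnd: "upper_bdd_integral M (ln (real q)) (f_c q c) \<le> ereal (ln C / real k + g * ln (real q))"
      if k: "k \<ge> N0" "k \<ge> 1" for k
    proof -
      have qk: "q ^ k \<ge> N0" using pow_ge_self[OF q, of k] k by simp
      have qk0: "real (q ^ k) > 0" using q by simp
      define Bd where "Bd = C * real (q ^ k) powr g"
      have Bd: "0 < Bd" unfolding Bd_def using C qk0 by simp
      have P: "Pk q c k x \<le> Bd" if "x \<in> {0..<1}" for x
      proof -
        have "Pk q c k x = cmod (Phi q c (q ^ k) x)" using Phi_pow[OF q] by simp
        also have "\<dots> \<le> Fsup q c (q ^ k)" by (rule Fsup_ge)
        also have "\<dots> \<le> Bd" using N0[OF qk] Fsup_nonneg unfolding Bd_def by simp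
        finally show ?thesis .
      qed
      have "upper_bdd_integral M (ln (real q)) (f_c q c) \<le> ereal (ln Bd / real k)"
        using upper_bound_inv[OF q M _ Bd P] k by simp
      also have "ln Bd = ln C + g * (real k * ln (real q))"
        unfolding Bd_def using C qk0 q by (simp add: ln_mult ln_realpow)
      also have "(ln C + g * (real k * ln (real q))) / real k = ln C / real k + g * ln (real q)"
        using k by (simp add: field_simps)
      finally show ?thesis .
    qed
    show "upper_bdd_integral M (ln (real q)) (f_c q c) \<le> ereal (g * ln (real q))"
    proof (rule ereal_le_epsilon2)
      fix e :: real assume e: "0 < e"
      define k where "k = max (max N0 1) (nat \<lceil>\<bar>ln C\<bar> / e\<rceil> + 1)"
      have k1: "k \<ge> N0" "k \<ge> 1" unfolding k_def by auto
      have "\<bar>ln C\<bar> / e < real k" unfolding k_def by linarith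
      then have "\<bar>ln C\<bar> < e * real k" using e by (simp add: field_simps)
      then have "ln C / real k \<le> e" using k1 by (simp add: field_simps)
      then have "ereal (ln C / real k + g * ln (real q)) \<le> ereal (g * ln (real q)) + ereal e" by simp
      with bnd[OF k1] show "upper_bdd_integral M (ln (real q)) (f_c q c) \<le> ereal (g * ln (real q)) + ereal e"
        by (rule order_trans)
    qed
  qed
qed

lemma grid_periodic:
  assumes q: "2 \<le> q" and L: "L > 0" and a: "a < q ^ L - 1"
  shows "real a / real (q ^ L - 1) \<in> {0..<1}"
    and "(times_q_map q ^^ L) (real a / real (q ^ L - 1)) = real a / real (q ^ L - 1)"
proof -
  define M where "M = q ^ L - 1"
  have qL: "q ^ L \<ge> 1" using q by simp
  have qL1: "1 < q ^ L" using a by linarith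
  then have qL2: "1 < real q ^ L" by (metis of_nat_1 of_nat_less_iff of_nat_power)
  have M: "real M > 0" using a qL2 unfolding M_def by (simp add: of_nat_diff)
  have aM: "real a < real M" using a unfolding M_def by (simp only: of_nat_less_iff)
  have y: "real a / real M \<in> {0..<1}" using aM M by (simp add: field_simps)
  then show "real a / real (q ^ L - 1) \<in> {0..<1}" unfolding M_def .
  have "real (q ^ L) = real M + 1" unfolding M_def using qL by (simp add: of_nat_diff)
  then have "real q ^ L * (real a / real M) = real a + real a / real M"
    using M by (simp add: field_simps)
  then have "(times_q_map q ^^ L) (real a / real M) = frac (real a + real a / real M)"
    using times_q_iter_frac[OF y] by simp
  also have "\<dots> = real a / real M"
    using y by (simp add: frac_add_int_left)
  finally show "(times_q_map q ^^ L) (real a / real (q ^ L - 1)) = real a / real (q ^ L - 1)"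
    unfolding M_def .
qed

lemma Pk_grid_bound:
  assumes q: "2 \<le> q" and L: "L > 0" and b: "beta_c q c < ereal b" and a: "a < q ^ L - 1"
  shows "Pk q c L (real a / real (q ^ L - 1)) \<le> exp (real L * b)"
proof (cases "Pk q c L (real a / real (q ^ L - 1)) = 0")
  case True then show ?thesis by simp
next
  case False
  define y where "y = real a / real (q ^ L - 1)"
  have P: "Pk q c L y > 0" using False Pk_nonneg unfolding y_def by (metis less_eq_real_def)
  have y1: "y \<in> {0..<1}" and per: "(times_q_map q ^^ L) y = y"
    unfolding y_def using grid_periodic[OF q L a] by auto
  define \<mu> where "\<mu> = distr (uniform_count_measure {..<L}) circle_borel (\<lambda>j. (times_q_map q ^^ j) y)"
  have inv: "\<mu> \<in> invariant_measures q" unfolding \<mu>_def by (rule periodic_measure[OF q L y1 per])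
  have "ereal (ln (Pk q c L y) / real L) = upper_bdd_integral \<mu> (ln (real q)) (f_c q c)"
    unfolding \<mu>_def by (rule periodic_integral[OF q L y1 P, symmetric])
  also have "\<dots> \<le> beta_c q c" unfolding beta_c_def using inv by (rule SUP_upper)
  also have "\<dots> < ereal b" by (rule b)
  finally have "ln (Pk q c L y) / real L < b" by simp
  then have "ln (Pk q c L y) < real L * b" using L by (simp add: field_simps)
  then have "Pk q c L y < exp (real L * b)" using P by (metis exp_less_cancel_iff exp_ln)
  thus ?thesis unfolding y_def by simp
qed

lemma Pk_bound_all:
  assumes q: "2 \<le> q" and b: "beta_c q c < ereal b" and b0: "0 \<le> b"
  shows "Pk q c i x \<le> (6 + 3 * real i * ln (real q)) * exp (real i * b)"
proof (cases "i = 0")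
  case True then show ?thesis by (simp add: Pk_def)
next
  case False
  then have i: "i > 0" by simp
  have "Pk q c i x \<le> 2 + (4 + 3 * ln (real (q ^ i - 1))) * exp (real i * b)"
    by (rule sampling_Pk[OF q i Pk_grid_bound[OF q i b]])
  also have "ln (real (q ^ i - 1)) \<le> real i * ln (real q)"
  proof -
    have qi: "q ^ i \<ge> 2"
    proof -
      have "q ^ 1 \<le> q ^ i" using i q by (intro power_increasing) auto
      thus ?thesis using q by simp
    qed
    then have "real (q ^ i - 1) \<le> real q ^ i" by (simp add: of_nat_diff)
    moreover have "real (q ^ i - 1) > 0"
    proof -
      have "1 < q ^ i" using qi by linarith
      then have "1 < real q ^ i" by (metis of_nat_1 of_nat_less_iff of_nat_power)
      thus ?thesis using qi by (simp add: of_nat_diff)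
    qed
    ultimately have "ln (real (q ^ i - 1)) \<le> ln (real q ^ i)" by (meson less_le_trans ln_le_cancel_iff)
    thus ?thesis using q by (simp add: ln_realpow)
  qed
  then have "(4 + 3 * ln (real (q ^ i - 1))) * exp (real i * b) \<le> (4 + 3 * (real i * ln (real q))) * exp (real i * b)"
    by (intro mult_right_mono) auto
  also have "2 \<le> 2 * exp (real i * b)" using b0 by simp
  finally show ?thesis by (simp add: algebra_simps)
qed

lemma digits_K:
  fixes N :: nat
  assumes q: "2 \<le> q" and N: "N \<ge> 1"
  obtains K where "N < q ^ K" "q ^ (K - 1) \<le> N" "K \<ge> 1"
proof -
  have ex: "\<exists>K. N < q ^ K"
  proof -
    have "(2::nat) ^ N \<le> q ^ N" using q by (intro power_mono) auto
    moreover have "N < 2 ^ N" by (rule less_exp)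
    ultimately show ?thesis by (meson less_le_trans)
  qed
  define K where "K = (LEAST K. N < q ^ K)"
  have K1: "N < q ^ K" unfolding K_def using ex by (rule LeastI_ex)
  have K0: "K \<ge> 1"
  proof (rule ccontr)
    assume "\<not> K \<ge> 1"
    then have "K = 0" by simp
    thus False using K1 N by simp
  qed
  have "\<not> N < q ^ (K - 1)" unfolding K_def by (rule not_less_Least) (use K0 K_def in simp)
  then have "q ^ (K - 1) \<le> N" by simp
  then show ?thesis using that K1 K0 by blast
qed

lemma Fsup_upper:
  assumes q: "2 \<le> q" and b: "beta_c q c < ereal b" and b0: "0 \<le> b" and N: "N \<ge> 1"
  shows "Fsup q c N \<le> real (q - 1) * exp b * ((1 + ln (real N) / ln (real q)) *
            (6 + 3 * (1 + ln (real N) / ln (real q)) * ln (real q))) * real N powr (b / ln (real q))"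
proof -
  obtain K where K: "N < q ^ K" "q ^ (K - 1) \<le> N" "K \<ge> 1" using digits_K[OF q N] by blast
  have lq: "0 < ln (real q)" using q by simp
  define K' where "K' = 1 + ln (real N) / ln (real q)"
  have KK': "real K \<le> K'"
  proof -
    have "real (K - 1) * ln (real q) = ln (real (q ^ (K - 1)))" using q by (simp add: ln_realpow)
    also have "\<dots> \<le> ln (real N)" using K(2) q N by simp
    finally have "real (K - 1) \<le> ln (real N) / ln (real q)" using lq by (simp add: field_simps)
    thus ?thesis unfolding K'_def using K(3) by (simp add: of_nat_diff)
  qed
  have ek: "exp (real K * b) \<le> exp b * real N powr (b / ln (real q))"
  proof -
    have "exp (real (K - 1) * b) = real (q ^ (K - 1)) powr (b / ln (real q))"
      using q lq by (simp add: powr_def ln_realpow)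
    also have "\<dots> \<le> real N powr (b / ln (real q))"
      using K(2) b0 lq by (intro powr_mono2) auto
    finally have "exp (real (K - 1) * b) \<le> real N powr (b / ln (real q))" .
    moreover have "exp (real K * b) = exp b * exp (real (K - 1) * b)"
      using K(3) by (simp add: of_nat_diff algebra_simps exp_add[symmetric])
    ultimately show ?thesis by simp
  qed
  have "cmod (Phi q c N x) \<le> real (q - 1) * exp b * (K' * (6 + 3 * K' * ln (real q))) * real N powr (b / ln (real q))" for x
  proof -
    have c1: "cmod (Phi q c N x) \<le> real (q - 1) * (\<Sum>i<K. Pk q c i x)" by (rule Phi_bound[OF q K(1)])
    have "(\<Sum>i<K. Pk q c i x) \<le> (\<Sum>i<K. (6 + 3 * real K * ln (real q)) * exp (real K * b))"
    proof (rule sum_mono)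
      fix i assume i: "i \<in> {..<K}"
      have "Pk q c i x \<le> (6 + 3 * real i * ln (real q)) * exp (real i * b)" by (rule Pk_bound_all[OF q b b0])
      also have "\<dots> \<le> (6 + 3 * real K * ln (real q)) * exp (real K * b)"
        using i lq b0 by (intro mult_mono) (auto intro!: mult_right_mono)
      finally show "Pk q c i x \<le> (6 + 3 * real K * ln (real q)) * exp (real K * b)" .
    qed
    also have "\<dots> = real K * (6 + 3 * real K * ln (real q)) * exp (real K * b)" by simp
    also have "\<dots> \<le> (K' * (6 + 3 * K' * ln (real q))) * (exp b * real N powr (b / ln (real q)))"
    proof (rule mult_mono[OF _ ek])
      have K'1: "1 \<le> K'" using KK' K(3) by linarith
      show "real K * (6 + 3 * real K * ln (real q)) \<le> K' * (6 + 3 * K' * ln (real q))"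
        using KK' lq K'1 by (intro mult_mono) (auto intro!: mult_right_mono)
      show "0 \<le> K' * (6 + 3 * K' * ln (real q))" using K'1 lq by simp
      show "0 \<le> exp (real K * b)" by simp
    qed
    finally have "(\<Sum>i<K. Pk q c i x) \<le> (K' * (6 + 3 * K' * ln (real q))) * (exp b * real N powr (b / ln (real q)))" .
    then have "real (q - 1) * (\<Sum>i<K. Pk q c i x) \<le> real (q - 1) * ((K' * (6 + 3 * K' * ln (real q))) * (exp b * real N powr (b / ln (real q))))"
      by (rule mult_left_mono) simp
    from order_trans[OF c1 this] show ?thesis by (simp only: mult_ac)
  qed
  then show ?thesis unfolding K'_def by (intro Fsup_le) (simp add: algebra_simps)
qed

lemma ln_le_powr:
  fixes x d :: real
  assumes N: "1 \<le> x" and d: "0 < d"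
  shows "ln x \<le> (1 / d) * x powr d"
proof -
  have "ln (x powr d) \<le> x powr d - 1" using N by (intro ln_le_minus_one) simp
  then have "d * ln x \<le> x powr d" using N by simp
  thus ?thesis using d by (simp add: field_simps)
qed

lemma valid_upper:
  assumes q: "2 \<le> q" and b: "beta_c q c < ereal b" and b0: "0 \<le> b" and g: "b / ln (real q) < g"
  shows "(\<lambda>N. Fsup q c N) \<in> O(\<lambda>N. real N powr g)"
proof -
  have lq: "0 < ln (real q)" using q by simp
  define d where "d = g - b / ln (real q)"
  have d: "0 < d" unfolding d_def using g by simp
  define A1 where "A1 = 1 + (2 / d) / ln (real q)"
  define A2 where "A2 = 6 + 3 * ln (real q) + 3 * (2 / d)"
  define C where "C = real (q - 1) * exp b * (A1 * A2)"
  have bound: "Fsup q c N \<le> C * real N powr g" if N: "N \<ge> 1" for N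
  proof -
    define p where "p = real N powr (d / 2)"
    have N1: "1 \<le> real N" using N by simp
    have p1: "1 \<le> p" unfolding p_def using N1 d by (intro ge_one_powr_ge_zero) auto
    have lnN: "ln (real N) \<le> (2 / d) * p"
      unfolding p_def using ln_le_powr[OF N1, of "d/2"] d by simp
    have lnN0: "0 \<le> ln (real N)" using N1 by simp
    have A1p: "0 \<le> A1" unfolding A1_def using d lq by simp
    have f1: "1 + ln (real N) / ln (real q) \<le> A1 * p"
    proof -
      have "ln (real N) / ln (real q) \<le> ((2 / d) * p) / ln (real q)"
        using lnN lq by (intro divide_right_mono) auto
      thus ?thesis unfolding A1_def using p1 by (simp add: algebra_simps)
    qed
    have f2: "6 + 3 * (1 + ln (real N) / ln (real q)) * ln (real q) \<le> A2 * p"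
    proof -
      have "6 + 3 * (1 + ln (real N) / ln (real q)) * ln (real q) = 6 + 3 * ln (real q) + 3 * ln (real N)"
        using lq by (simp add: algebra_simps)
      also have "\<dots> \<le> (6 + 3 * ln (real q)) * p + 3 * ((2 / d) * p)"
        using lnN p1 lq by (intro add_mono) (auto intro!: mult_left_mono[of 1 p, simplified])
      finally show ?thesis unfolding A2_def by (simp add: algebra_simps)
    qed
    have "Fsup q c N \<le> real (q - 1) * exp b * ((1 + ln (real N) / ln (real q)) *
            (6 + 3 * (1 + ln (real N) / ln (real q)) * ln (real q))) * real N powr (b / ln (real q))"
      by (rule Fsup_upper[OF q b b0 N])
    also have "\<dots> \<le> real (q - 1) * exp b * ((A1 * p) * (A2 * p)) * real N powr (b / ln (real q))"
    proof -
      have "(1 + ln (real N) / ln (real q)) * (6 + 3 * (1 + ln (real N) / ln (real q)) * ln (real q)) \<le> (A1 * p) * (A2 * p)"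
        using f1 f2 lnN0 lq p1 A1p by (intro mult_mono) (auto intro!: add_nonneg_nonneg)
      thus ?thesis by (intro mult_right_mono mult_left_mono) auto
    qed
    also have "\<dots> = C * (p * p * real N powr (b / ln (real q)))" unfolding C_def by (simp add: algebra_simps)
    also have "p * p * real N powr (b / ln (real q)) = real N powr g"
      unfolding p_def d_def using N1 by (simp add: powr_add[symmetric])
    finally show ?thesis .
  qed
  show ?thesis
  proof (rule bigoI)
    have "\<forall>N\<ge>1. norm (Fsup q c N) \<le> C * norm (real N powr g)"
      using bound Fsup_nonneg by simp
    thus "eventually (\<lambda>N. norm (Fsup q c N) \<le> C * norm (real N powr g)) sequentially"
      unfolding eventually_sequentially by blast
  qed
qed

lemma beta_le: "2 \<le> q \<Longrightarrow> beta_c q c \<le> ereal (ln (real q))"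
  unfolding beta_c_def upper_bdd_u
proof (rule SUP_least)
  fix M
  show "ereal (ln (real q)) - enn2ereal (\<integral>\<^sup>+ x. u_fun q c x \<partial>M) \<le> ereal (ln (real q))"
    using enn2ereal_nonneg[of "\<integral>\<^sup>+ x. u_fun q c x \<partial>M"] by (cases "enn2ereal (\<integral>\<^sup>+ x. u_fun q c x \<partial>M)") auto
qed

theorem proposition3p2:
  fixes q :: nat and c :: real
  assumes "q \<ge> 2"
  shows "ereal (gamma_c q c) = beta_c q c / ereal (ln (real q))"
proof -
  have q: "2 \<le> q" using assms by simp
  have lq: "0 < ln (real q)" using q by simp
  define V where "V = {g. (\<lambda>N. Fsup q c N) \<in> O(\<lambda>N. real N powr g)}"
  have gam: "gamma_c q c = Inf V" unfolding V_def by (rule gamma_eq)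
  have bdd: "bdd_below V" unfolding V_def by (rule bdd_belowI[where m="1/2"]) (blast intro: valid_ge_half)
  have up: "gamma_c q c \<le> b / ln (real q)" if b: "beta_c q c < ereal b" "0 \<le> b" for b
  proof (rule ccontr)
    assume "\<not> gamma_c q c \<le> b / ln (real q)"
    then have lt: "b / ln (real q) < gamma_c q c" by simp
    define g where "g = (b / ln (real q) + gamma_c q c) / 2"
    have avg: "\<And>u v::real. u < v \<Longrightarrow> u < (u + v) / 2 \<and> (u + v) / 2 < v" by auto
    have g1a: "b / ln (real q) < g" unfolding g_def using avg[OF lt] by blast
    have g1b: "g < gamma_c q c" unfolding g_def using avg[OF lt] by blast
    note g1 = g1a g1b
    have "g \<in> V" unfolding V_def using valid_upper[OF q b g1(1)] by simp
    then have "Inf V \<le> g" using bdd by (rule cInf_lower)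
    then show False using g1 gam by simp
  qed
  have Vne: "V \<noteq> {}"
  proof -
    have "beta_c q c < ereal (ln (real q) + 1)" using beta_le[OF q] by (rule le_less_trans) simp
    then have "(ln (real q) + 1) / ln (real q) + 1 \<in> V"
      unfolding V_def using lq by (intro CollectI valid_upper[OF q]) auto
    thus ?thesis by blast
  qed
  have half: "1/2 \<le> gamma_c q c"
    unfolding gam using Vne by (rule cInf_greatest) (unfold V_def, blast intro: valid_ge_half)
  have low: "beta_c q c \<le> ereal (g * ln (real q))" if "g \<in> V" for g
    using that unfolding V_def by (auto intro: valid_beta[OF q])
  show ?thesis
  proof (cases "beta_c q c")
    case (real r)
    have r0: "0 \<le> r"
    proof (rule ccontr)
      assume "\<not> 0 \<le> r"
      then have "beta_c q c < ereal (ln (real q) / 4)" using real lq by simp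
      then have "gamma_c q c \<le> (ln (real q) / 4) / ln (real q)" using lq by (intro up) auto
      then show False using half lq by simp
    qed
    have ge: "r / ln (real q) \<le> gamma_c q c"
      unfolding gam using Vne
    proof (rule cInf_greatest)
      fix g assume "g \<in> V"
      then have "ereal r \<le> ereal (g * ln (real q))" using low real by simp
      then show "r / ln (real q) \<le> g" using lq by (simp add: field_simps)
    qed
    have le: "gamma_c q c \<le> r / ln (real q)"
    proof (rule ccontr)
      assume "\<not> gamma_c q c \<le> r / ln (real q)"
      then have lt: "r / ln (real q) < gamma_c q c" by simp
      define b where "b = (r + gamma_c q c * ln (real q)) / 2"
      have "r < gamma_c q c * ln (real q)" using lt lq by (simp add: field_simps)
      then have b1: "r < b" "b < gamma_c q c * ln (real q)" unfolding b_def by auto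
      have "gamma_c q c \<le> b / ln (real q)" using b1 r0 real by (intro up) auto
      then have "gamma_c q c * ln (real q) \<le> b" using lq by (simp add: field_simps)
      then show False using b1 by simp
    qed
    have "gamma_c q c = r / ln (real q)" using ge le by simp
    then show ?thesis using real lq by simp
  next
    case PInf
    then show ?thesis using beta_le[OF q, of c] by simp
  next
    case MInf
    then have "beta_c q c < ereal (ln (real q) / 4)" by simp
    then have "gamma_c q c \<le> (ln (real q) / 4) / ln (real q)" using lq by (intro up) auto
    then show ?thesis using half lq by simp
  qed
qed

end
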